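(* Let $m\ge n$, $0\le r<n$, $A^1,\dots,A^l\in\mathbb{R}^{m\times n}$, $b\in\mathbb{R}^l$, and let $X\in\mathcal{L}\cap\mathcal{M}(r)$ of rank $s$ with SVD $X=U\Sigma V^\top$ as in the context. If Assumption 2 holds at $X$, then $$\mathrm{T}^B_{\mathcal{L}\cap\mathcal{M}_X(r)}(X)=\mathrm{T}_{\mathcal{L}}(X)\cap\mathrm{T}^B_{\mathcal{M}_X(r)}(X).$$
   Context: $\langle X,Y\rangle=\sum_{i,j}X_{ij}Y_{ij}$. $\mathcal{A}(X)=(\langle A^1,X\rangle,\dots,\langle A^l,X\rangle)^\top$, $\mathcal{L}=\{X:\mathcal{A}(X)=b\}$, $\mathrm{T}_\mathcal{L}(X)=\{\Xi:\langle A^i,\Xi\rangle=0,\ i=1,\dots,l\}$, $\mathcal{M}(r)=\{X:\operatorname{rank}(X)\le r\}$. SVD convention: $X=U\Sigma V^\top$ with $U$, $V$ orthogonal of sizes $m$, $n$, $\Sigma$ with diagonal $\sigma_1\ge\dots\ge\sigma_s>0$ followed by zeros, $\Gamma=\{1,\dots,s\}$; $U_J,V_J$ are column submatrices indexed by $J$. $\mathcal{J}=\{J\subseteq\{1,\dots,n\}:|J|=r,\ \Gamma\subseteq J\}$, $\mathcal{M}_X(J)=\{UBV_J^\top:B\in\mathbb{R}^{m\times r}\}$, $\mathcal{M}_X(r)=\bigcup_{J\in\mathcal{J}}\mathcal{M}_X(J)$. The Bouligand tangent cone $\mathrm{T}^B_\Omega(X)$ of a closed set $\Omega$ at $X\in\Omega$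 is the set of $\Xi$ for which there exist $X^k\in\Omega$, $X^k\to X$, $t_k\downarrow0$ with $(X^k-X)/t_k\to\Xi$. $R^i_X=U^\top A^iV_\Gamma$; Assumption 2 at $X$: $R^1_X,\dots,R^l_X$ are linearly independent. *)

theory Defs
  imports Complex_Main "Jordan_Normal_Form.Matrix"
begin

text \<open>Real m x n matrices are Jordan_Normal_Form matrices in carrier_mat m n.
Indices are 0-based: paper index i corresponds to i-1 here.\<close>

definition frob_inner :: "real mat \<Rightarrow> real mat \<Rightarrow> real" where
  "frob_inner X Y = (\<Sum>i<dim_row X. \<Sum>j<dim_col X. X $$ (i,j) * Y $$ (i,j))"

definition frob_norm :: "real mat \<Rightarrow> real" where
  "frob_norm X = sqrt (frob_inner X X)"

definition affL :: "nat \<Rightarrow> nat \<Rightarrow> nat \<Rightarrow> (nat \<Rightarrow> real mat) \<Rightarrow> (nat \<Rightarrow> real) \<Rightarrow> real mat set" where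
  "affL m n l A b = {X \<in> carrier_mat m n. \<forall>i<l. frob_inner (A i) X = b i}"

text \<open>Tangent space T_L(X) (independent of X).\<close>
definition tanL :: "nat \<Rightarrow> nat \<Rightarrow> nat \<Rightarrow> (nat \<Rightarrow> real mat) \<Rightarrow> real mat set" where
  "tanL m n l A = {Xi \<in> carrier_mat m n. \<forall>i<l. frob_inner (A i) Xi = 0}"

definition bouligand :: "nat \<Rightarrow> nat \<Rightarrow> real mat set \<Rightarrow> real mat \<Rightarrow> real mat set" where
  "bouligand m n Omega X = {Xi \<in> carrier_mat m n. \<exists>(Xs :: nat \<Rightarrow> real mat) (t :: nat \<Rightarrow> real).
      (\<forall>k. Xs k \<in> Omega) \<and> (\<lambda>k. frob_norm (Xs k - X)) \<longlonglongrightarrow> 0 \<and>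
      (\<forall>k. t k > 0) \<and> decseq t \<and> t \<longlonglongrightarrow> 0 \<and>
      (\<lambda>k. frob_norm ((1 / t k) \<cdot>\<^sub>m (Xs k - X) - Xi)) \<longlonglongrightarrow> 0}"

definition col_sub :: "real mat \<Rightarrow> nat set \<Rightarrow> real mat" where
  "col_sub V J = mat (dim_row V) (card J) (\<lambda>(i,k). V $$ (i, sorted_list_of_set J ! k))"

definition idxJ :: "nat \<Rightarrow> nat \<Rightarrow> nat \<Rightarrow> nat set set" where
  "idxJ n r s = {J. J \<subseteq> {0..<n} \<and> card J = r \<and> {0..<s} \<subseteq> J}"

definition MXJ :: "nat \<Rightarrow> real mat \<Rightarrow> real mat \<Rightarrow> nat set \<Rightarrow> real mat set" where
  "MXJ m U V J = {U * B * transpose_mat (col_sub V J) | B. B \<in> carrier_mat m (card J)}"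

definition MXr :: "nat \<Rightarrow> nat \<Rightarrow> nat \<Rightarrow> nat \<Rightarrow> real mat \<Rightarrow> real mat \<Rightarrow> real mat set" where
  "MXr m n r s U V = (\<Union>J\<in>idxJ n r s. MXJ m U V J)"

definition is_svd :: "nat \<Rightarrow> nat \<Rightarrow> real mat \<Rightarrow> real mat \<Rightarrow> real mat \<Rightarrow> real mat \<Rightarrow> nat \<Rightarrow> bool" where
  "is_svd m n X U Sig V s \<longleftrightarrow>
     U \<in> carrier_mat m m \<and> transpose_mat U * U = 1\<^sub>m m \<and>
     V \<in> carrier_mat n n \<and> transpose_mat V * V = 1\<^sub>m n \<and>
     Sig \<in> carrier_mat m n \<and> s \<le> min m n \<and>
     (\<forall>i<m. \<forall>j<n. i \<noteq> j \<longrightarrow> Sig $$ (i,j) = 0) \<and>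
     (\<forall>i<s. Sig $$ (i,i) > 0) \<and>
     (\<forall>i j. i \<le> j \<longrightarrow> j < s \<longrightarrow> Sig $$ (j,j) \<le> Sig $$ (i,i)) \<and>
     (\<forall>i. s \<le> i \<longrightarrow> i < min m n \<longrightarrow> Sig $$ (i,i) = 0) \<and>
     X = U * Sig * transpose_mat V"

text \<open>Assumption 2: R^i_X = U^T A^i V_Gamma (i < l) linearly independent.\<close>
definition assumption2 :: "nat \<Rightarrow> (nat \<Rightarrow> real mat) \<Rightarrow> real mat \<Rightarrow> real mat \<Rightarrow> nat \<Rightarrow> bool" where
  "assumption2 l A U V s \<longleftrightarrow>
     (let R = (\<lambda>i. transpose_mat U * A i * col_sub V {0..<s}) in
      \<forall>c :: nat \<Rightarrow> real.
        (\<forall>p<dim_row U. \<forall>q<s. (\<Sum>i<l. c i * R i $$ (p,q)) = 0) \<longrightarrow> (\<forall>i<l. c i = 0))"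

end

theory Submission
  imports Defs "HOL-Library.Infinite_Set"
begin


lemma mult_entry:
  assumes "A \<in> carrier_mat p m" "B \<in> carrier_mat m n" "i < p" "j < n"
  shows "(A * B) $$ (i,j) = (\<Sum>a<m. A $$ (i,a) * B $$ (a,j))"
  using assms by (auto simp: scalar_prod_def lessThan_atLeast0 intro!: sum.cong)

definition conv :: "nat \<Rightarrow> nat \<Rightarrow> (nat \<Rightarrow> real mat) \<Rightarrow> real mat \<Rightarrow> bool" where
  "conv m n Y Z \<longleftrightarrow> (\<forall>i<m. \<forall>j<n. (\<lambda>k. Y k $$ (i,j)) \<longlonglongrightarrow> Z $$ (i,j))"

lemma conv_left:
  assumes "L \<in> carrier_mat p m" "\<forall>k. Y k \<in> carrier_mat m n" "Z \<in> carrier_mat m n" "conv m n Y Z"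
  shows "conv p n (\<lambda>k. L * Y k) (L * Z)"
  unfolding conv_def
proof (intro allI impI)
  fix i j assume ij: "i < p" "j < n"
  have "(\<lambda>k. \<Sum>a<m. L $$ (i,a) * Y k $$ (a,j)) \<longlonglongrightarrow> (\<Sum>a<m. L $$ (i,a) * Z $$ (a,j))"
    using assms(4) ij unfolding conv_def by (intro tendsto_intros) auto
  then show "(\<lambda>k. (L * Y k) $$ (i, j)) \<longlonglongrightarrow> (L * Z) $$ (i, j)"
    using mult_entry[OF assms(1) assms(2)[rule_format] ij] mult_entry[OF assms(1) assms(3) ij] by simp
qed

lemma conv_right:
  assumes "R \<in> carrier_mat n q" "\<forall>k. Y k \<in> carrier_mat m n" "Z \<in> carrier_mat m n" "conv m n Y Z"
  shows "conv m q (\<lambda>k. Y k * R) (Z * R)"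
  unfolding conv_def
proof (intro allI impI)
  fix i j assume ij: "i < m" "j < q"
  have "(\<lambda>k. \<Sum>a<n. Y k $$ (i,a) * R $$ (a,j)) \<longlonglongrightarrow> (\<Sum>a<n. Z $$ (i,a) * R $$ (a,j))"
    using assms(4) ij unfolding conv_def by (intro tendsto_intros) auto
  then show "(\<lambda>k. (Y k * R) $$ (i, j)) \<longlonglongrightarrow> (Z * R) $$ (i, j)"
    using mult_entry[OF assms(2)[rule_format] assms(1) ij] mult_entry[OF assms(3) assms(1) ij] by simp
qed

lemma entry_le_frob:
  assumes "i < dim_row M" "j < dim_col M"
  shows "\<bar>M $$ (i,j)\<bar> \<le> frob_norm M"
proof -
  have "(M $$ (i,j))^2 = M $$ (i,j) * M $$ (i,j)" by (simp add: power2_eq_square)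
  also have "\<dots> \<le> (\<Sum>j'<dim_col M. M $$ (i,j') * M $$ (i,j'))"
    using assms by (intro member_le_sum) auto
  also have "\<dots> \<le> frob_inner M M" unfolding frob_inner_def
    using assms
    by (intro member_le_sum[where f="\<lambda>i. \<Sum>j'<dim_col M. M $$ (i,j') * M $$ (i,j')"])
       (auto intro!: sum_nonneg)
  finally show ?thesis unfolding frob_norm_def
    by (metis real_sqrt_abs real_sqrt_le_mono)
qed

lemma frob_conv:
  assumes "\<forall>k. M k \<in> carrier_mat m n" "Z \<in> carrier_mat m n"
    "(\<lambda>k. frob_norm (M k - Z)) \<longlonglongrightarrow> 0"
  shows "conv m n M Z"
  unfolding conv_def
proof (intro allI impI)
  fix i j assume ij: "i < m" "j < n"
  have "(\<lambda>k. M k $$ (i,j) - Z $$ (i,j)) \<longlonglongrightarrow> 0"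
  proof (rule tendsto_0_le[OF assms(3), where K=1])
    show "\<forall>\<^sub>F k in sequentially. norm (M k $$ (i, j) - Z $$ (i, j)) \<le> norm (frob_norm (M k - Z)) * 1"
      using entry_le_frob[of i "M k - Z" j for k] assms ij by (auto intro!: always_eventually order_trans[OF _ abs_ge_self])
  qed
  then show "(\<lambda>k. M k $$ (i,j)) \<longlonglongrightarrow> Z $$ (i,j)" by (simp add: LIM_zero_iff)
qed



lemma col_sub_carrier: "V \<in> carrier_mat n n \<Longrightarrow> col_sub V J \<in> carrier_mat n (card J)"
  unfolding col_sub_def by auto

lemma col_sub_index:
  "i < dim_row V \<Longrightarrow> k < card J \<Longrightarrow> col_sub V J $$ (i,k) = V $$ (i, sorted_list_of_set J ! k)"
  unfolding col_sub_def by auto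

lemma jl_props:
  assumes "finite J" "J \<subseteq> {0..<n}" "k < card J"
  shows "sorted_list_of_set J ! k \<in> J" "sorted_list_of_set J ! k < n"
proof -
  have "sorted_list_of_set J ! k \<in> set (sorted_list_of_set J)"
    using assms by (intro nth_mem) simp
  then show "sorted_list_of_set J ! k \<in> J" using assms by simp
  then show "sorted_list_of_set J ! k < n" using assms by auto
qed

lemma WtW:
  assumes V: "V \<in> carrier_mat n n" "transpose_mat V * V = 1\<^sub>m n" and J: "finite J" "J \<subseteq> {0..<n}"
  shows "transpose_mat (col_sub V J) * col_sub V J = 1\<^sub>m (card J)"
proof (rule eq_matI)
  let ?W = "col_sub V J" let ?jl = "sorted_list_of_set J"
  have W: "?W \<in> carrier_mat n (card J)" using col_sub_carrier V by blast
  fix a b assume "a < dim_row (1\<^sub>m (card J))" "b < dim_col (1\<^sub>m (card J))"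
  then have ab: "a < card J" "b < card J" by auto
  have ja: "?jl ! a < n" and jb: "?jl ! b < n" using jl_props[OF J] ab by auto
  have "(transpose_mat ?W * ?W) $$ (a,b) = (\<Sum>c<n. ?W $$ (c,a) * ?W $$ (c,b))"
    using mult_entry[of "transpose_mat ?W" "card J" n ?W "card J" a b] W ab by simp
  also have "\<dots> = (\<Sum>c<n. transpose_mat V $$ (?jl!a, c) * V $$ (c, ?jl!b))"
    using W V ab ja jb by (intro sum.cong) (auto simp: col_sub_index)
  also have "\<dots> = (transpose_mat V * V) $$ (?jl!a, ?jl!b)"
    using mult_entry[of "transpose_mat V" n n V n "?jl!a" "?jl!b"] V ja jb by simp
  also have "\<dots> = (if a = b then 1 else 0)"
    using V ja jb ab J by (simp add: nth_eq_iff_index_eq)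
  finally show "(transpose_mat ?W * ?W) $$ (a,b) = 1\<^sub>m (card J) $$ (a,b)" using ab by simp
qed (auto simp: col_sub_def)

definition FJ :: "real mat \<Rightarrow> real mat \<Rightarrow> nat set \<Rightarrow> real mat \<Rightarrow> real mat" where
  "FJ U V J Y = U * (transpose_mat U * Y * col_sub V J) * transpose_mat (col_sub V J)"

lemma FJ_carrier:
  assumes "U \<in> carrier_mat m m" "V \<in> carrier_mat n n" "Y \<in> carrier_mat m n"
  shows "FJ U V J Y \<in> carrier_mat m n"
proof -
  have W: "col_sub V J \<in> carrier_mat n (card J)" using col_sub_carrier[OF assms(2)] .
  have "transpose_mat U * Y * col_sub V J \<in> carrier_mat m (card J)"
    by (rule mult_carrier_mat[OF mult_carrier_mat[OF _ assms(3)] W]) (use assms in simp)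
  then show ?thesis unfolding FJ_def
    by (rule mult_carrier_mat[OF mult_carrier_mat[OF assms(1)]]) (use W in simp)
qed

lemma MXJ_carrier:
  assumes "U \<in> carrier_mat m m" "V \<in> carrier_mat n n" "Y \<in> MXJ m U V J"
  shows "Y \<in> carrier_mat m n"
proof -
  have W: "col_sub V J \<in> carrier_mat n (card J)" using col_sub_carrier[OF assms(2)] .
  obtain B where B: "B \<in> carrier_mat m (card J)" and YB: "Y = U * B * transpose_mat (col_sub V J)"
    using assms(3) unfolding MXJ_def by auto
  have Wt: "transpose_mat (col_sub V J) \<in> carrier_mat (card J) n" using W by simp
  show ?thesis unfolding YB by (rule mult_carrier_mat[OF mult_carrier_mat[OF assms(1) B] Wt])
qed

lemma MXJ_FJ:
  assumes U: "U \<in> carrier_mat m m" "transpose_mat U * U = 1\<^sub>m m"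
    and V: "V \<in> carrier_mat n n" "transpose_mat V * V = 1\<^sub>m n" and J: "finite J" "J \<subseteq> {0..<n}"
    and Y: "Y \<in> MXJ m U V J"
  shows "FJ U V J Y = Y"
proof -
  let ?W = "col_sub V J"
  have W: "?W \<in> carrier_mat n (card J)" using col_sub_carrier V by blast
  obtain B where B: "B \<in> carrier_mat m (card J)" and YB: "Y = U * B * transpose_mat ?W"
    using Y unfolding MXJ_def by auto
  have Ut: "transpose_mat U \<in> carrier_mat m m" and Wt: "transpose_mat ?W \<in> carrier_mat (card J) n"
    using U W by auto
  have BW: "B * transpose_mat ?W \<in> carrier_mat m n" using B Wt by simp
  have e1: "U * B * transpose_mat ?W = U * (B * transpose_mat ?W)" by (rule assoc_mult_mat[OF U(1) B Wt])
  have e2: "transpose_mat U * (U * (B * transpose_mat ?W)) = (transpose_mat U * U) * (B * transpose_mat ?W)"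
    by (rule assoc_mult_mat[OF Ut U(1) BW, symmetric])
  have e3: "(transpose_mat U * U) * (B * transpose_mat ?W) = B * transpose_mat ?W"
    unfolding U(2) using BW by (rule left_mult_one_mat)
  have e4: "B * transpose_mat ?W * ?W = B * (transpose_mat ?W * ?W)" by (rule assoc_mult_mat[OF B Wt W])
  have "transpose_mat U * Y * ?W = B * (transpose_mat ?W * ?W)"
    unfolding YB e1 e2 e3 e4 ..
  also have "\<dots> = B" using WtW[OF V J] B by simp
  finally show ?thesis unfolding FJ_def YB by simp
qed

lemma FJ_MXJ:
  assumes U: "U \<in> carrier_mat m m" and V: "V \<in> carrier_mat n n"
    and Y: "Y \<in> carrier_mat m n" "FJ U V J Y = Y"
  shows "Y \<in> MXJ m U V J"
proof -
  have W: "col_sub V J \<in> carrier_mat n (card J)" using col_sub_carrier V by blast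
  have B: "transpose_mat U * Y * col_sub V J \<in> carrier_mat m (card J)"
    by (rule mult_carrier_mat[OF mult_carrier_mat[OF _ Y(1)] W]) (use U in simp)
  have "Y = U * (transpose_mat U * Y * col_sub V J) * transpose_mat (col_sub V J)"
    using Y(2) unfolding FJ_def by simp
  then show ?thesis unfolding MXJ_def using B by blast
qed

lemma LYR_lin1:
  fixes L R P Q :: "real mat"
  assumes L: "L \<in> carrier_mat p m" and R: "R \<in> carrier_mat n q" and P: "P \<in> carrier_mat m n" and Q: "Q \<in> carrier_mat m n"
  shows "L * (c \<cdot>\<^sub>m (P - Q)) * R = c \<cdot>\<^sub>m (L * P * R - L * Q * R)"
proof -
  have PQ: "P - Q \<in> carrier_mat m n" using Q by (rule minus_carrier_mat)
  have LP: "L * P \<in> carrier_mat p n" "L * Q \<in> carrier_mat p n" using L P Q by auto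
  have "L * (c \<cdot>\<^sub>m (P - Q)) = c \<cdot>\<^sub>m (L * (P - Q))" by (rule mult_smult_distrib[OF L PQ])
  also have "L * (P - Q) = L * P - L * Q" by (rule mult_minus_distrib_mat[OF L P Q])
  finally have "L * (c \<cdot>\<^sub>m (P - Q)) * R = (c \<cdot>\<^sub>m (L * P - L * Q)) * R" by simp
  also have "\<dots> = c \<cdot>\<^sub>m ((L * P - L * Q) * R)"
    by (rule mult_smult_assoc_mat[OF minus_carrier_mat[OF LP(2)] R])
  also have "(L * P - L * Q) * R = L * P * R - L * Q * R"
    by (rule minus_mult_distrib_mat[OF LP R])
  finally show ?thesis .
qed

lemma LYR_lin2:
  fixes L R P Q :: "real mat"
  assumes L: "L \<in> carrier_mat p m" and R: "R \<in> carrier_mat n q" and P: "P \<in> carrier_mat m n" and Q: "Q \<in> carrier_mat m n"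
  shows "L * (P + c \<cdot>\<^sub>m Q) * R = L * P * R + c \<cdot>\<^sub>m (L * Q * R)"
proof -
  have cQ: "c \<cdot>\<^sub>m Q \<in> carrier_mat m n" using Q by simp
  have LP: "L * P \<in> carrier_mat p n" "L * Q \<in> carrier_mat p n" using L P Q by auto
  have "L * (P + c \<cdot>\<^sub>m Q) = L * P + L * (c \<cdot>\<^sub>m Q)" by (rule mult_add_distrib_mat[OF L P cQ])
  also have "L * (c \<cdot>\<^sub>m Q) = c \<cdot>\<^sub>m (L * Q)" by (rule mult_smult_distrib[OF L Q])
  finally have "L * (P + c \<cdot>\<^sub>m Q) * R = (L * P + c \<cdot>\<^sub>m (L * Q)) * R" by simp
  also have "\<dots> = L * P * R + (c \<cdot>\<^sub>m (L * Q)) * R"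
    by (rule add_mult_distrib_mat[OF LP(1) _ R]) (use LP in simp)
  also have "(c \<cdot>\<^sub>m (L * Q)) * R = c \<cdot>\<^sub>m (L * Q * R)" by (rule mult_smult_assoc_mat[OF LP(2) R])
  finally show ?thesis .
qed



lemma FJ_lin1:
  assumes U: "U \<in> carrier_mat m m" and V: "V \<in> carrier_mat n n"
    and P: "P \<in> carrier_mat m n" and Q: "Q \<in> carrier_mat m n"
  shows "FJ U V J (c \<cdot>\<^sub>m (P - Q)) = c \<cdot>\<^sub>m (FJ U V J P - FJ U V J Q)"
proof -
  have W: "col_sub V J \<in> carrier_mat n (card J)" using col_sub_carrier[OF V] .
  have Ut: "transpose_mat U \<in> carrier_mat m m" using U by simp
  have Wt: "transpose_mat (col_sub V J) \<in> carrier_mat (card J) n" using W by simp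
  have P': "transpose_mat U * P * col_sub V J \<in> carrier_mat m (card J)"
    by (rule mult_carrier_mat[OF mult_carrier_mat[OF Ut P] W])
  have Q': "transpose_mat U * Q * col_sub V J \<in> carrier_mat m (card J)"
    by (rule mult_carrier_mat[OF mult_carrier_mat[OF Ut Q] W])
  show ?thesis unfolding FJ_def LYR_lin1[OF Ut W P Q] LYR_lin1[OF U Wt P' Q'] ..
qed

lemma FJ_lin2:
  assumes U: "U \<in> carrier_mat m m" and V: "V \<in> carrier_mat n n"
    and P: "P \<in> carrier_mat m n" and Q: "Q \<in> carrier_mat m n"
  shows "FJ U V J (P + c \<cdot>\<^sub>m Q) = FJ U V J P + c \<cdot>\<^sub>m FJ U V J Q"
proof -
  have W: "col_sub V J \<in> carrier_mat n (card J)" using col_sub_carrier[OF V] .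
  have Ut: "transpose_mat U \<in> carrier_mat m m" using U by simp
  have Wt: "transpose_mat (col_sub V J) \<in> carrier_mat (card J) n" using W by simp
  have P': "transpose_mat U * P * col_sub V J \<in> carrier_mat m (card J)"
    by (rule mult_carrier_mat[OF mult_carrier_mat[OF Ut P] W])
  have Q': "transpose_mat U * Q * col_sub V J \<in> carrier_mat m (card J)"
    by (rule mult_carrier_mat[OF mult_carrier_mat[OF Ut Q] W])
  show ?thesis unfolding FJ_def LYR_lin2[OF Ut W P Q] LYR_lin2[OF U Wt P' Q'] ..
qed

lemma sum_jl:
  assumes "finite J"
  shows "(\<Sum>b<card J. f (sorted_list_of_set J ! b)) = (\<Sum>a\<in>J. f a)"
proof -
  have "(\<Sum>a\<in>J. f a) = (\<Sum>a\<in>set (sorted_list_of_set J). f a)" using assms by simp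
  also have "\<dots> = sum_list (map f (sorted_list_of_set J))"
    by (rule sum.distinct_set_conv_list) simp
  also have "\<dots> = (\<Sum>b<length (sorted_list_of_set J). f (sorted_list_of_set J ! b))"
    by (simp add: sum_list_sum_nth lessThan_atLeast0)
  finally show ?thesis by simp
qed

lemma VtW:
  assumes V: "V \<in> carrier_mat n n" "transpose_mat V * V = 1\<^sub>m n" and J: "finite J" "J \<subseteq> {0..<n}"
    and a: "a < n" and b: "b < card J"
  shows "(transpose_mat V * col_sub V J) $$ (a,b) = (if a = sorted_list_of_set J ! b then 1 else 0)"
proof -
  let ?W = "col_sub V J" let ?jl = "sorted_list_of_set J"
  have W: "?W \<in> carrier_mat n (card J)" using col_sub_carrier V by blast
  have jb: "?jl ! b < n" using jl_props[OF J b] by auto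
  have "(transpose_mat V * ?W) $$ (a,b) = (\<Sum>c<n. transpose_mat V $$ (a,c) * ?W $$ (c,b))"
    using mult_entry[of "transpose_mat V" n n ?W "card J" a b] W V a b by simp
  also have "\<dots> = (\<Sum>c<n. transpose_mat V $$ (a, c) * V $$ (c, ?jl!b))"
    using W V a b jb by (intro sum.cong) (auto simp: col_sub_index)
  also have "\<dots> = (transpose_mat V * V) $$ (a, ?jl!b)"
    using mult_entry[of "transpose_mat V" n n V n a "?jl!b"] V a jb by simp
  finally show ?thesis using V a jb by simp
qed

lemma keyK:
  assumes V: "V \<in> carrier_mat n n" "transpose_mat V * V = 1\<^sub>m n" and J: "finite J" "J \<subseteq> {0..<n}"
    and S: "S \<in> carrier_mat m n" and Sz: "\<forall>i<m. \<forall>a<n. a \<notin> J \<longrightarrow> S $$ (i,a) = 0"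
  shows "S * transpose_mat V * col_sub V J * transpose_mat (col_sub V J) = S * transpose_mat V"
proof -
  let ?W = "col_sub V J" let ?jl = "sorted_list_of_set J"
  have W: "?W \<in> carrier_mat n (card J)" using col_sub_carrier V by blast
  have Vt: "transpose_mat V \<in> carrier_mat n n" using V by simp
  have Wt: "transpose_mat ?W \<in> carrier_mat (card J) n" using W by simp
  have P: "transpose_mat V * ?W \<in> carrier_mat n (card J)" by (rule mult_carrier_mat[OF Vt W])
  have as: "S * transpose_mat V * ?W = S * (transpose_mat V * ?W)" by (rule assoc_mult_mat[OF S Vt W])
  have SP: "S * (transpose_mat V * ?W) \<in> carrier_mat m (card J)" by (rule mult_carrier_mat[OF S P])
  have SPe: "(S * (transpose_mat V * ?W)) $$ (i,b) = S $$ (i, ?jl ! b)" if ib: "i < m" "b < card J" for i b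
  proof -
    have jb: "?jl ! b < n" using jl_props[OF J ib(2)] by auto
    have "(S * (transpose_mat V * ?W)) $$ (i,b) = (\<Sum>a<n. S $$ (i,a) * (transpose_mat V * ?W) $$ (a,b))"
      by (rule mult_entry[OF S P ib])
    also have "\<dots> = (\<Sum>a<n. if a = ?jl ! b then S $$ (i,a) else 0)"
      using VtW[OF V J _ ib(2)] by (intro sum.cong) auto
    also have "\<dots> = S $$ (i, ?jl ! b)" using jb by simp
    finally show ?thesis .
  qed
  have SVt: "S * transpose_mat V \<in> carrier_mat m n" by (rule mult_carrier_mat[OF S Vt])
  show ?thesis unfolding as
  proof (rule eq_matI)
    fix i c assume "i < dim_row (S * transpose_mat V)" "c < dim_col (S * transpose_mat V)"
    then have ic: "i < m" "c < n" using SVt by auto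
    have "(S * (transpose_mat V * ?W) * transpose_mat ?W) $$ (i,c)
        = (\<Sum>b<card J. (S * (transpose_mat V * ?W)) $$ (i,b) * transpose_mat ?W $$ (b,c))"
      by (rule mult_entry[OF SP Wt ic])
    also have "\<dots> = (\<Sum>b<card J. (\<lambda>a. S $$ (i,a) * V $$ (c,a)) (?jl ! b))"
      using SPe ic W V by (intro sum.cong) (auto simp: col_sub_index)
    also have "\<dots> = (\<Sum>a\<in>J. S $$ (i,a) * V $$ (c,a))" by (rule sum_jl[OF J(1)])
    also have "\<dots> = (\<Sum>a<n. S $$ (i,a) * V $$ (c,a))"
      using J Sz ic by (intro sum.mono_neutral_left) auto
    also have "\<dots> = (\<Sum>a<n. S $$ (i,a) * transpose_mat V $$ (a,c))"
      using V ic by (intro sum.cong) auto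
    also have "\<dots> = (S * transpose_mat V) $$ (i,c)" by (rule mult_entry[OF S Vt ic, symmetric])
    finally show "(S * (transpose_mat V * ?W) * transpose_mat ?W) $$ (i,c) = (S * transpose_mat V) $$ (i,c)" .
  qed (use SVt Wt in auto)
qed



lemma X_MXJ:
  assumes svd: "is_svd m n X U Sig V s" and mn: "n \<le> m" and J: "J \<in> idxJ n r s"
  shows "X \<in> MXJ m U V J"
proof -
  have U: "U \<in> carrier_mat m m" and V: "V \<in> carrier_mat n n" "transpose_mat V * V = 1\<^sub>m n"
    and S: "Sig \<in> carrier_mat m n" and X: "X = U * Sig * transpose_mat V"
    using svd unfolding is_svd_def by auto
  have Jf: "finite J" "J \<subseteq> {0..<n}" and Js: "{0..<s} \<subseteq> J" using J unfolding idxJ_def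
    by (auto intro: finite_subset)
  have Sz: "\<forall>i<m. \<forall>a<n. a \<notin> J \<longrightarrow> Sig $$ (i,a) = 0"
  proof (intro allI impI)
    fix i a
    assume ia: "i < m" "a < n" "a \<notin> J"
    then have "s \<le> a" using Js by (metis atLeastLessThan_iff not_le subsetD zero_le)
    then show "Sig $$ (i,a) = 0" using svd ia mn unfolding is_svd_def
      by (cases "i = a") auto
  qed
  let ?W = "col_sub V J"
  have W: "?W \<in> carrier_mat n (card J)" using col_sub_carrier V by blast
  have Vt: "transpose_mat V \<in> carrier_mat n n" using V by simp
  have Wt: "transpose_mat ?W \<in> carrier_mat (card J) n" using W by simp
  have B: "Sig * transpose_mat V * ?W \<in> carrier_mat m (card J)"
    by (rule mult_carrier_mat[OF mult_carrier_mat[OF S Vt] W])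
  have "U * (Sig * transpose_mat V * ?W) * transpose_mat ?W = U * (Sig * transpose_mat V * ?W * transpose_mat ?W)"
    by (rule assoc_mult_mat[OF U B Wt])
  also have "\<dots> = U * (Sig * transpose_mat V)" using keyK[OF V Jf S Sz] by simp
  also have "\<dots> = X" unfolding X by (rule assoc_mult_mat[OF U S Vt, symmetric])
  finally show ?thesis unfolding MXJ_def using B by blast
qed

lemma fi_lin1:
  assumes "Ai \<in> carrier_mat m n" "P \<in> carrier_mat m n" "Q \<in> carrier_mat m n"
  shows "frob_inner Ai (c \<cdot>\<^sub>m (P - Q)) = c * (frob_inner Ai P - frob_inner Ai Q)"
  using assms unfolding frob_inner_def
  by (auto simp: sum_distrib_left sum_subtractf[symmetric] algebra_simps intro!: sum.cong)

lemma fi_lin2: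
  assumes "Ai \<in> carrier_mat m n" "P \<in> carrier_mat m n" "Q \<in> carrier_mat m n"
  shows "frob_inner Ai (P + c \<cdot>\<^sub>m Q) = frob_inner Ai P + c * frob_inner Ai Q"
  using assms unfolding frob_inner_def
  by (auto simp: sum_distrib_left sum.distrib[symmetric] algebra_simps intro!: sum.cong)

lemma fi_conv:
  assumes "Ai \<in> carrier_mat m n" "conv m n Y Z"
  shows "(\<lambda>k. frob_inner Ai (Y k)) \<longlonglongrightarrow> frob_inner Ai Z"
  using assms unfolding frob_inner_def conv_def by (auto intro!: tendsto_intros)

lemma frob_smult: "frob_norm (c \<cdot>\<^sub>m M) = \<bar>c\<bar> * frob_norm M"
proof -
  have "frob_inner (c \<cdot>\<^sub>m M) (c \<cdot>\<^sub>m M) = c^2 * frob_inner M M"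
    unfolding frob_inner_def by (auto simp: sum_distrib_left power2_eq_square algebra_simps intro!: sum.cong)
  then show ?thesis unfolding frob_norm_def by (simp add: real_sqrt_mult)
qed

lemma frob_zero: "frob_norm (0\<^sub>m m n) = 0"
  unfolding frob_norm_def frob_inner_def by simp



theorem lemma3p3:
  fixes m n r l s :: nat and A :: "nat \<Rightarrow> real mat" and b :: "nat \<Rightarrow> real"
    and X U Sig V :: "real mat"
  assumes "n \<le> m" and "r < n"
    and "\<forall>i<l. A i \<in> carrier_mat m n"
    and "is_svd m n X U Sig V s"
    and "X \<in> affL m n l A b"
    and "s \<le> r"
    and "assumption2 l A U V s"
  shows "bouligand m n (affL m n l A b \<inter> MXr m n r s U V) X
         = tanL m n l A \<inter> bouligand m n (MXr m n r s U V) X"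
proof -
  note mn = assms(1) and Acar = assms(3) and svd = assms(4) and XL = assms(5)
  have U: "U \<in> carrier_mat m m" "transpose_mat U * U = 1\<^sub>m m"
    and V: "V \<in> carrier_mat n n" "transpose_mat V * V = 1\<^sub>m n"
    using svd unfolding is_svd_def by auto
  have Xc: "X \<in> carrier_mat m n" and Xb: "\<forall>i<l. frob_inner (A i) X = b i"
    using XL unfolding affL_def by auto
  have Jfin: "finite J" "J \<subseteq> {0..<n}" if "J \<in> idxJ n r s" for J
    using that unfolding idxJ_def by (auto intro: finite_subset)
  have MXr_car: "Y \<in> carrier_mat m n" if "Y \<in> MXr m n r s U V" for Y
    using that MXJ_carrier[OF U(1) V(1)] unfolding MXr_def by blast
  show ?thesis
  proof (rule equalityI)
    show "bouligand m n (affL m n l A b \<inter> MXr m n r s U V) X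
         \<subseteq> tanL m n l A \<inter> bouligand m n (MXr m n r s U V) X"
    proof
      fix Xi assume "Xi \<in> bouligand m n (affL m n l A b \<inter> MXr m n r s U V) X"
      then obtain Xs t where Xi: "Xi \<in> carrier_mat m n"
        and Xs: "\<forall>k. Xs k \<in> affL m n l A b \<inter> MXr m n r s U V"
        and c1: "(\<lambda>k. frob_norm (Xs k - X)) \<longlonglongrightarrow> 0"
        and c2: "\<forall>k. t k > 0" "decseq t" "t \<longlonglongrightarrow> 0"
        and c3: "(\<lambda>k. frob_norm ((1 / t k) \<cdot>\<^sub>m (Xs k - X) - Xi)) \<longlonglongrightarrow> 0"
        unfolding bouligand_def by blast
      have B: "Xi \<in> bouligand m n (MXr m n r s U V) X"
        unfolding bouligand_def using Xi Xs c1 c2 c3 by blast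
      have Xsc: "Xs k \<in> carrier_mat m n" and Xsb: "\<forall>i<l. frob_inner (A i) (Xs k) = b i" for k
        using Xs unfolding affL_def by auto
      define Y where "Y k = (1 / t k) \<cdot>\<^sub>m (Xs k - X)" for k
      have Yc: "\<forall>k. Y k \<in> carrier_mat m n" unfolding Y_def
        using Xc by (simp add: minus_carrier_mat)
      have cv: "conv m n Y Xi" by (rule frob_conv[OF Yc Xi]) (use c3 in \<open>simp add: Y_def\<close>)
      have "frob_inner (A i) Xi = 0" if i: "i < l" for i
      proof -
        have "(\<lambda>k. frob_inner (A i) (Y k)) \<longlonglongrightarrow> frob_inner (A i) Xi"
          using fi_conv[OF _ cv] Acar i by blast
        moreover have "frob_inner (A i) (Y k) = 0" for k
          unfolding Y_def using fi_lin1[of "A i" m n "Xs k" X] Acar i Xsc Xc Xsb Xb by simp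
        ultimately show ?thesis by (simp add: LIMSEQ_const_iff)
      qed
      then have "Xi \<in> tanL m n l A" unfolding tanL_def using Xi by blast
      then show "Xi \<in> tanL m n l A \<inter> bouligand m n (MXr m n r s U V) X" using B by blast
    qed
  next
    show "tanL m n l A \<inter> bouligand m n (MXr m n r s U V) X
         \<subseteq> bouligand m n (affL m n l A b \<inter> MXr m n r s U V) X"
    proof
      fix Xi assume H: "Xi \<in> tanL m n l A \<inter> bouligand m n (MXr m n r s U V) X"
      then have Xi: "Xi \<in> carrier_mat m n" and XiT: "\<forall>i<l. frob_inner (A i) Xi = 0"
        unfolding tanL_def by auto
      from H obtain Xs t where Xs: "\<forall>k. Xs k \<in> MXr m n r s U V"
        and c2: "\<forall>k. t k > 0"
        and c3: "(\<lambda>k. frob_norm ((1 / t k) \<cdot>\<^sub>m (Xs k - X) - Xi)) \<longlonglongrightarrow> 0"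
        unfolding bouligand_def by blast
      have "\<forall>k. \<exists>J. J \<in> idxJ n r s \<and> Xs k \<in> MXJ m U V J"
        using Xs unfolding MXr_def by blast
      then obtain Jf where Jf0: "\<forall>k. Jf k \<in> idxJ n r s \<and> Xs k \<in> MXJ m U V (Jf k)"
        by (rule choice[THEN exE]) blast
      then have Jf: "\<And>k. Jf k \<in> idxJ n r s" "\<And>k. Xs k \<in> MXJ m U V (Jf k)" by auto
      have "finite (idxJ n r s)"
        by (rule finite_subset[of _ "Pow {0..<n}"]) (auto simp: idxJ_def)
      then have "finite (range Jf)" using Jf(1) by (meson finite_subset image_subsetI)
      then obtain k0 where "infinite {k \<in> UNIV. Jf k = Jf k0}"
        using pigeonhole_infinite[of "UNIV :: nat set" Jf] by auto
      then obtain g :: "nat \<Rightarrow> nat" where g: "strict_mono g" "\<forall>k. g k \<in> {k \<in> UNIV. Jf k = Jf k0}"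
        using infinite_enumerate by blast
      then have g2: "\<And>k. Jf (g k) = Jf k0" by blast
      define J where "J = Jf k0"
      have J: "J \<in> idxJ n r s" unfolding J_def by (rule Jf(1))
      note JJ = Jfin[OF J]
      define Y where "Y k = (1 / t (g k)) \<cdot>\<^sub>m (Xs (g k) - X)" for k
      have Xsc: "Xs k \<in> carrier_mat m n" for k using MXr_car Xs by blast
      have Yc: "\<forall>k. Y k \<in> carrier_mat m n" unfolding Y_def
        using Xc by (simp add: minus_carrier_mat)
      have "((\<lambda>k. frob_norm ((1 / t k) \<cdot>\<^sub>m (Xs k - X) - Xi)) \<circ> g) \<longlonglongrightarrow> 0"
        by (rule LIMSEQ_subseq_LIMSEQ[OF c3 g(1)])
      then have cv: "conv m n Y Xi"
        by (intro frob_conv[OF Yc Xi]) (simp add: Y_def o_def)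
      have FX: "FJ U V J X = X" by (rule MXJ_FJ[OF U V JJ X_MXJ[OF svd mn J]])
      have FY: "FJ U V J (Y k) = Y k" for k
      proof -
        have "FJ U V J (Xs (g k)) = Xs (g k)"
          using MXJ_FJ[OF U V JJ] Jf(2)[of "g k"] g2 unfolding J_def by metis
        then show ?thesis unfolding Y_def FJ_lin1[OF U(1) V(1) Xsc Xc] FX by simp
      qed
      let ?W = "col_sub V J"
      have W: "?W \<in> carrier_mat n (card J)" using col_sub_carrier V by blast
      have Ut: "transpose_mat U \<in> carrier_mat m m" using U by simp
      have Wt: "transpose_mat ?W \<in> carrier_mat (card J) n" using W by simp
      have c1: "conv m n (\<lambda>k. transpose_mat U * Y k) (transpose_mat U * Xi)"
        by (rule conv_left[OF Ut Yc Xi cv])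
      have c2': "conv m (card J) (\<lambda>k. transpose_mat U * Y k * ?W) (transpose_mat U * Xi * ?W)"
        by (rule conv_right[OF W _ _ c1]) (use mult_carrier_mat[OF Ut] Yc Xi in auto)
      have c3': "conv m (card J) (\<lambda>k. U * (transpose_mat U * Y k * ?W)) (U * (transpose_mat U * Xi * ?W))"
        by (rule conv_left[OF U(1) _ _ c2']) (use mult_carrier_mat[OF mult_carrier_mat[OF Ut] W] Yc Xi in auto)
      have c4: "conv m n (\<lambda>k. FJ U V J (Y k)) (FJ U V J Xi)"
        unfolding FJ_def by (rule conv_right[OF Wt _ _ c3']) (use mult_carrier_mat[OF U(1) mult_carrier_mat[OF mult_carrier_mat[OF Ut] W]] Yc Xi in auto)
      have FXi: "FJ U V J Xi = Xi"
      proof (rule eq_matI)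
        fix i j assume "i < dim_row Xi" "j < dim_col Xi"
        then have ij: "i < m" "j < n" using Xi by auto
        have "(\<lambda>k. Y k $$ (i,j)) \<longlonglongrightarrow> FJ U V J Xi $$ (i,j)"
          using c4 ij unfolding conv_def FY by blast
        moreover have "(\<lambda>k. Y k $$ (i,j)) \<longlonglongrightarrow> Xi $$ (i,j)" using cv ij unfolding conv_def by blast
        ultimately show "FJ U V J Xi $$ (i,j) = Xi $$ (i,j)" by (rule LIMSEQ_unique)
      qed (use FJ_carrier[OF U(1) V(1) Xi] Xi in auto)
      have XiJ: "Xi \<in> MXJ m U V J" by (rule FJ_MXJ[OF U(1) V(1) Xi FXi])
      define t' where "t' k = inverse (real (Suc k))" for k
      define Xs' where "Xs' k = X + t' k \<cdot>\<^sub>m Xi" for k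
      have Xs'c: "Xs' k \<in> carrier_mat m n" for k unfolding Xs'_def using Xi by simp
      have diff: "Xs' k - X = t' k \<cdot>\<^sub>m Xi" for k
        unfolding Xs'_def by (rule eq_matI) (use Xi Xc in auto)
      have mem: "Xs' k \<in> affL m n l A b \<inter> MXr m n r s U V" for k
      proof -
        have "frob_inner (A i) (Xs' k) = b i" if "i < l" for i
          unfolding Xs'_def using fi_lin2[of "A i" m n X Xi] Acar that Xc Xi Xb XiT by simp
        then have "Xs' k \<in> affL m n l A b" unfolding affL_def using Xs'c by blast
        moreover have "FJ U V J (Xs' k) = Xs' k"
          unfolding Xs'_def FJ_lin2[OF U(1) V(1) Xc Xi] FX FXi ..
        then have "Xs' k \<in> MXJ m U V J" by (rule FJ_MXJ[OF U(1) V(1) Xs'c])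
        then have "Xs' k \<in> MXr m n r s U V" unfolding MXr_def using J by blast
        ultimately show ?thesis by blast
      qed
      have tpos: "\<forall>k. t' k > 0" unfolding t'_def by simp
      have tdec: "decseq t'" unfolding t'_def decseq_def
        by (auto intro!: le_imp_inverse_le)
      have tlim: "t' \<longlonglongrightarrow> 0" unfolding t'_def by (rule LIMSEQ_inverse_real_of_nat)
      have n1: "(\<lambda>k. frob_norm (Xs' k - X)) \<longlonglongrightarrow> 0"
        unfolding diff frob_smult using tpos tlim
        by (auto intro: tendsto_mult_left_zero simp: abs_of_pos)
      have z: "(1 / t' k) \<cdot>\<^sub>m (Xs' k - X) - Xi = 0\<^sub>m m n" for k
        unfolding diff by (rule eq_matI) (use Xi tpos in \<open>auto simp: less_imp_neq[symmetric]\<close>)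
      have n2: "(\<lambda>k. frob_norm ((1 / t' k) \<cdot>\<^sub>m (Xs' k - X) - Xi)) \<longlonglongrightarrow> 0"
        unfolding z frob_zero by simp
      show "Xi \<in> bouligand m n (affL m n l A b \<inter> MXr m n r s U V) X"
        unfolding bouligand_def using Xi mem n1 tpos tdec tlim n2 by blast
    qed
  qed
qed

end
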